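(* Let $m\in\mathcal{P}(\mathcal{S})$ be such that $Q^d(m)$ is irreducible for all $d\in D^s$, and let $\mathcal{D}(m)=\{d_1,\dots,d_n\}$. For each $k$, let $x^{d_k}(m)$ be the unique $x\in\mathcal{P}(\mathcal{S})$ with $0=\sum_{i\in\mathcal{S}}\sum_{a\in\mathcal{A}}x_iQ_{ija}(m)(d_k)_{ia}$ for all $j\in\mathcal{S}$. Then $$\phi(m)=\operatorname{conv}\big(x^{d_1}(m),\dots,x^{d_n}(m)\big).$$
   Context: Setting: $\mathcal{S}=\{1,\dots,S\}$ ($S>1$), $\mathcal{A}=\{1,\dots,A\}$; for each $a$, $m$, $(Q_{ija}(m))_{i,j}$ is a conservative generator (off-diagonal $\ge 0$, zero row sums); $m\mapsto Q_{ija}(m)$ Lipschitz, $m\mapsto r_{ia}(m)$ continuous; $\beta\in(0,1)$. $\Pi^s$: stationary strategies (matrices $(\pi_{ia})$ with rows in $\mathcal{P}(\mathcal{A})$); $D^s$: deterministic stationary strategies, identified with maps $d:\mathcal{S}\to\mathcal{A}$ via $d_{ia}=\mathbf{1}[a=d(i)]$. $Q^\pi(m)_{ij}=\sum_aQ_{ija}(m)\pi_{ia}$. $V^\ast(m)$: value function of the continuous-time MDP with rates $Q_{ija}(m)$, rewards $r_{ia}(m)$, discount rate $\beta$. $O_i(m)=\operatorname{argmax}_{a}\{r_{ia}(m)+\sum_jQ_{ija}(m)V^\ast_j(m)\}$, $\mathcal{D}(m)=\{d:\mathcal{S}\to\mathcal{A}: d(i)\in O_i(m)\ \forall i\}$.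 Best-response map: $\phi(m)=\{x\in\mathcal{P}(\mathcal{S}):\exists\,\pi\in\operatorname{conv}(\mathcal{D}(m)),\ x^TQ^\pi(m)=0\}$. Irreducible: the directed graph with edges $i\to j$ ($i\ne j$) where the entry is positive is strongly connected. *)

theory Defs
  imports "HOL-Analysis.Analysis"
begin

text \<open>States are a finite type 's, actions a finite type 'a.
  Distributions over states / mean-field states m are vectors in real^'s.
  Q m i j a is Q_{ija}(m); r m i a is r_{ia}(m).\<close>

definition Pdist :: "(real^'n) set" where
  "Pdist = {x. (\<forall>i. 0 \<le> x$i) \<and> (\<Sum>i\<in>UNIV. x$i) = 1}"

definition conservative :: "('s \<Rightarrow> 's \<Rightarrow> real) \<Rightarrow> bool" where
  "conservative G \<longleftrightarrow> (\<forall>i j. i \<noteq> j \<longrightarrow> 0 \<le> G i j) \<and> (\<forall>i. (\<Sum>j\<in>UNIV. G i j) = 0)"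

definition stat_strategies :: "(real^'a^'s) set" where
  "stat_strategies = {\<pi>. \<forall>i. \<pi>$i \<in> Pdist}"

definition det_mat :: "('s \<Rightarrow> 'a) \<Rightarrow> real^'a^'s" where
  "det_mat d = (\<chi> i. \<chi> a. if a = d i then 1 else 0)"

definition Qpol :: "(real^'s \<Rightarrow> 's \<Rightarrow> 's \<Rightarrow> 'a::finite \<Rightarrow> real) \<Rightarrow> real^'s \<Rightarrow> real^'a^'s \<Rightarrow> 's \<Rightarrow> 's \<Rightarrow> real" where
  "Qpol Q m \<pi> i j = (\<Sum>a\<in>UNIV. Q m i j a * \<pi>$i$a)"

definition irreducible :: "('s \<Rightarrow> 's \<Rightarrow> real) \<Rightarrow> bool" where
  "irreducible G \<longleftrightarrow> (\<forall>i j. (i, j) \<in> {(k, l). k \<noteq> l \<and> 0 < G k l}\<^sup>*)"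

text \<open>Optimal value function, characterised as the solution of the
  Hamilton-Jacobi-Bellman (optimality) equation of the discounted
  continuous-time MDP: beta V_i = max_a (r_ia + sum_j Q_ija V_j).\<close>
definition Vstar :: "(real^'s \<Rightarrow> 's::finite \<Rightarrow> 's \<Rightarrow> 'a::finite \<Rightarrow> real) \<Rightarrow> (real^'s \<Rightarrow> 's \<Rightarrow> 'a \<Rightarrow> real)
     \<Rightarrow> real \<Rightarrow> real^'s \<Rightarrow> 's \<Rightarrow> real" where
  "Vstar Q r \<beta> m = (THE V. \<forall>i. \<beta> * V i = Max (range (\<lambda>a. r m i a + (\<Sum>j\<in>UNIV. Q m i j a * V j))))"

definition Oset :: "(real^'s \<Rightarrow> 's::finite \<Rightarrow> 's \<Rightarrow> 'a::finite \<Rightarrow> real) \<Rightarrow> (real^'s \<Rightarrow> 's \<Rightarrow> 'a \<Rightarrow> real)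
     \<Rightarrow> real \<Rightarrow> real^'s \<Rightarrow> 's \<Rightarrow> 'a set" where
  "Oset Q r \<beta> m i = {a. \<forall>b. r m i b + (\<Sum>j\<in>UNIV. Q m i j b * Vstar Q r \<beta> m j)
                          \<le> r m i a + (\<Sum>j\<in>UNIV. Q m i j a * Vstar Q r \<beta> m j)}"

definition Dopt :: "(real^'s \<Rightarrow> 's::finite \<Rightarrow> 's \<Rightarrow> 'a::finite \<Rightarrow> real) \<Rightarrow> (real^'s \<Rightarrow> 's \<Rightarrow> 'a \<Rightarrow> real)
     \<Rightarrow> real \<Rightarrow> real^'s \<Rightarrow> ('s \<Rightarrow> 'a) set" where
  "Dopt Q r \<beta> m = {d. \<forall>i. d i \<in> Oset Q r \<beta> m i}"

definition phi :: "(real^'s \<Rightarrow> 's::finite \<Rightarrow> 's \<Rightarrow> 'a::finite \<Rightarrow> real) \<Rightarrow> (real^'s \<Rightarrow> 's \<Rightarrow> 'a \<Rightarrow> real)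
     \<Rightarrow> real \<Rightarrow> real^'s \<Rightarrow> (real^'s) set" where
  "phi Q r \<beta> m = {x \<in> Pdist. \<exists>\<pi> \<in> convex hull (det_mat ` Dopt Q r \<beta> m).
                      \<forall>j. (\<Sum>i\<in>UNIV. x$i * Qpol Q m \<pi> i j) = 0}"

text \<open>x^d(m): the (unique under irreducibility) stationary distribution of Q^d(m).\<close>
definition xdet :: "(real^'s \<Rightarrow> 's::finite \<Rightarrow> 's \<Rightarrow> 'a::finite \<Rightarrow> real) \<Rightarrow> real^'s \<Rightarrow> ('s \<Rightarrow> 'a) \<Rightarrow> real^'s" where
  "xdet Q m d = (THE x. x \<in> Pdist \<and>
      (\<forall>j. (\<Sum>i\<in>UNIV. \<Sum>a\<in>UNIV. x$i * Q m i j a * det_mat d $i$a) = 0))"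

end

theory Submission
  imports Defs
begin


definition stat :: "('s::finite \<Rightarrow> 's \<Rightarrow> real) \<Rightarrow> real^'s \<Rightarrow> bool" where
  "stat G x \<longleftrightarrow> (\<forall>j. (\<Sum>i\<in>UNIV. x$i * G i j) = 0)"

lemma pos_zero:
  fixes G :: "'s::finite \<Rightarrow> 's \<Rightarrow> real"
  assumes cons: "conservative G" and irr: "irreducible G"
    and nn: "\<forall>i. 0 \<le> y$i" and st: "stat G y" and k: "y$k = 0"
  shows "y = 0"
proof -
  let ?E = "{(k, l). k \<noteq> l \<and> 0 < G k l}"
  have bk: "y$i = 0" if e: "(i,j) \<in> ?E" and yj: "y$j = 0" for i j
  proof -
    have "(\<Sum>i\<in>UNIV. y$i * G i j) = 0" using st by (simp add: stat_def)
    moreover have "(\<Sum>i\<in>UNIV. y$i * G i j) = (\<Sum>i\<in>UNIV-{j}. y$i * G i j)"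
      by (subst sum.remove[of UNIV j]) (auto simp: yj)
    ultimately have s0: "(\<Sum>i\<in>UNIV-{j}. y$i * G i j) = 0" by simp
    have "\<forall>l\<in>UNIV-{j}. y$l * G l j = 0"
      by (rule sum_nonneg_eq_0_iff[THEN iffD1, OF _ _ s0]) (use nn cons in \<open>auto simp: conservative_def\<close>)
    then have "y$i * G i j = 0" using e by auto
    then show ?thesis using e by auto
  qed
  have "y$i = 0" for i
  proof -
    have "(i,k) \<in> ?E\<^sup>*" using irr by (simp add: irreducible_def)
    then show ?thesis
      by (induction rule: converse_rtrancl_induct) (use k bk in auto)
  qed
  then show ?thesis by (simp add: vec_eq_iff)
qed

lemma stat_pos:
  fixes G :: "'s::finite \<Rightarrow> 's \<Rightarrow> real"
  assumes cons: "conservative G" and irr: "irreducible G"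
    and x: "x \<in> Pdist" and st: "stat G x"
  shows "0 < x$i"
proof (rule ccontr)
  assume "\<not> 0 < x$i"
  with x have "x$i = 0" by (auto simp: Pdist_def not_less intro: antisym)
  then have "x = 0" using pos_zero[OF cons irr _ st] x by (auto simp: Pdist_def)
  then show False using x by (simp add: Pdist_def)
qed

lemma stat_unique:
  fixes G :: "'s::finite \<Rightarrow> 's \<Rightarrow> real"
  assumes cons: "conservative G" and irr: "irreducible G"
    and x: "x \<in> Pdist" and st: "stat G x"
    and x': "x' \<in> Pdist" and st': "stat G x'"
  shows "x = x'"
proof -
  have p': "0 < x'$i" for i using stat_pos[OF cons irr x' st'] .
  define t where "t = Min (range (\<lambda>i. x$i / x'$i))"
  have "t \<in> range (\<lambda>i. x$i / x'$i)" unfolding t_def by (rule Min_in) auto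
  then obtain k where tk: "t = x$k / x'$k" by auto
  have tle: "t \<le> x$i / x'$i" for i unfolding t_def by (rule Min_le) auto
  define y where "y = x - t *\<^sub>R x'"
  have nn: "\<forall>i. 0 \<le> y$i"
  proof
    fix i
    have "t * x'$i \<le> x$i" using tle[of i] p'[of i] by (simp add: pos_le_divide_eq)
    then show "0 \<le> y$i" by (simp add: y_def)
  qed
  have yk: "y$k = 0" using p'[of k] by (simp add: y_def tk)
  have sty: "stat G y"
    using st st' unfolding stat_def y_def
    by (simp add: algebra_simps sum_subtractf sum_distrib_left[symmetric] mult.assoc)
  have "y = 0" by (rule pos_zero[OF cons irr nn sty yk])
  then have xe: "x = t *\<^sub>R x'" by (simp add: y_def)
  then have "(\<Sum>i\<in>UNIV. x$i) = t * (\<Sum>i\<in>UNIV. x'$i)" by (simp add: sum_distrib_left)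
  then have "t = 1" using x x' by (simp add: Pdist_def)
  then show ?thesis using xe by simp
qed

lemma compact_Pdist: "compact (Pdist :: (real^'n::finite) set)"
proof -
  have c1: "closed {x::real^'n. \<forall>i. 0 \<le> x$i}"
    by (simp add: closed_Collect_all closed_Collect_le continuous_on_component)
  have c2: "closed {x::real^'n. (\<Sum>i\<in>UNIV. x$i) = 1}"
    by (intro closed_Collect_eq continuous_intros)
  have "Pdist = {x::real^'n. \<forall>i. 0 \<le> x$i} \<inter> {x. (\<Sum>i\<in>UNIV. x$i) = 1}"
    by (auto simp: Pdist_def)
  moreover have "bounded (Pdist :: (real^'n) set)"
  proof -
    have "Pdist \<subseteq> cbox (0::real^'n) (\<chi> i. 1)"
    proof
      fix x :: "real^'n" assume x: "x \<in> Pdist"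
      have "x$i \<le> 1" for i
      proof -
        have "x$i \<le> (\<Sum>j\<in>UNIV. x$j)"
          by (rule member_le_sum) (use x in \<open>auto simp: Pdist_def\<close>)
        then show ?thesis using x by (simp add: Pdist_def)
      qed
      then show "x \<in> cbox 0 (\<chi> i. 1)" using x by (simp add: mem_box_cart Pdist_def)
    qed
    then show ?thesis using bounded_cbox bounded_subset by blast
  qed
  ultimately show ?thesis using c1 c2 by (metis compact_eq_bounded_closed closed_Int)
qed

lemma convex_Pdist: "convex (Pdist :: (real^'n::finite) set)"
  unfolding convex_def Pdist_def
  by (auto simp: sum.distrib sum_distrib_left[symmetric])



lemma stat_exists:
  fixes G :: "'s::finite \<Rightarrow> 's \<Rightarrow> real"
  assumes cons: "conservative G"
  shows "\<exists>x\<in>Pdist. stat G x"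
proof -
  define c where "c = 1 + (\<Sum>i\<in>UNIV. \<bar>G i i\<bar>)"
  have cpos: "0 < c" unfolding c_def by (simp add: add_pos_nonneg sum_nonneg)
  have cge: "\<bar>G j j\<bar> \<le> c" for j
  proof -
    have "\<bar>G j j\<bar> \<le> (\<Sum>i\<in>UNIV. \<bar>G i i\<bar>)" by (rule member_le_sum) auto
    then show ?thesis unfolding c_def by simp
  qed
  define f where "f = (\<lambda>x::real^'s. x + (1/c) *\<^sub>R (\<chi> j. \<Sum>i\<in>UNIV. x$i * G i j))"
  have contf: "continuous_on Pdist f"
    unfolding f_def by (intro continuous_intros continuous_on_vec_lambda) 
  have fim: "f \<in> Pdist \<rightarrow> Pdist"
  proof
    fix x :: "real^'s" assume x: "x \<in> Pdist"
    have nn: "0 \<le> f x $ j" for j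
    proof -
      have "f x $ j = x$j + (1/c) * (\<Sum>i\<in>UNIV. x$i * G i j)" by (simp add: f_def)
      also have "(\<Sum>i\<in>UNIV. x$i * G i j) = x$j * G j j + (\<Sum>i\<in>UNIV-{j}. x$i * G i j)"
        by (subst sum.remove[of UNIV j]) auto
      finally have eq: "f x $ j = x$j * (1 + G j j / c) + (1/c) * (\<Sum>i\<in>UNIV-{j}. x$i * G i j)"
        by (simp add: algebra_simps)
      have "0 \<le> 1 + G j j / c" using cge[of j] cpos by (simp add: abs_le_iff field_simps)
      moreover have "0 \<le> (\<Sum>i\<in>UNIV-{j}. x$i * G i j)"
        using x cons by (intro sum_nonneg) (auto simp: Pdist_def conservative_def)
      ultimately show ?thesis using x cpos unfolding eq by (simp add: Pdist_def)
    qed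
    have "(\<Sum>j\<in>UNIV. f x $ j) = (\<Sum>j\<in>UNIV. x$j) + (1/c) * (\<Sum>j\<in>UNIV. \<Sum>i\<in>UNIV. x$i * G i j)"
      by (simp add: f_def sum.distrib sum_distrib_left)
    also have "(\<Sum>j\<in>UNIV. \<Sum>i\<in>UNIV. x$i * G i j) = (\<Sum>i\<in>UNIV. x$i * (\<Sum>j\<in>UNIV. G i j))"
      by (subst sum.swap) (simp add: sum_distrib_left)
    also have "\<dots> = 0" using cons by (simp add: conservative_def)
    finally show "f x \<in> Pdist" using x nn by (simp add: Pdist_def)
  qed
  have ne: "Pdist \<noteq> ({} :: (real^'s) set)"
  proof -
    obtain i0 :: 's where True by simp
    have "((\<chi> i. if i = i0 then 1 else 0) :: real^'s) \<in> Pdist" by (simp add: Pdist_def)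
    then show ?thesis by auto
  qed
  obtain x where x: "x \<in> Pdist" and fx: "f x = x"
    using brouwer[OF compact_Pdist convex_Pdist ne contf fim] by blast
  have "stat G x"
  proof -
    have "(1/c) *\<^sub>R (\<chi> j. \<Sum>i\<in>UNIV. x$i * G i j) = 0" using fx unfolding f_def by simp
    then have "(\<chi> j. \<Sum>i\<in>UNIV. x$i * G i j) = 0" using cpos by simp
    then show ?thesis by (simp add: stat_def vec_eq_iff)
  qed
  then show ?thesis using x by blast
qed



definition Rset :: "('s::finite \<Rightarrow> 'a::finite set) \<Rightarrow> (real^'a^'s) set" where
  "Rset Ok = {\<pi>. (\<forall>i. \<pi>$i \<in> Pdist) \<and> (\<forall>i a. \<pi>$i$a \<noteq> 0 \<longrightarrow> a \<in> Ok i)}"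

definition upd :: "real^'a::finite^'s::finite \<Rightarrow> 's \<Rightarrow> 'a \<Rightarrow> real^'a^'s" where
  "upd \<pi> i a = (\<chi> k. if k = i then (\<chi> b. if b = a then 1 else 0) else \<pi>$k)"

lemma upd_comp: "upd \<pi> i a $ k $ b = (if k = i then (if b = a then 1 else 0) else \<pi>$k$b)"
  by (simp add: upd_def)

lemma upd_Rset: "\<pi> \<in> Rset Ok \<Longrightarrow> a \<in> Ok i \<Longrightarrow> upd \<pi> i a \<in> Rset Ok"
  unfolding Rset_def Pdist_def
proof (clarsimp simp: upd_comp)
  fix k assume "\<forall>i. (\<forall>ia. 0 \<le> \<pi> $ i $ ia) \<and> sum (($) (\<pi> $ i)) UNIV = 1"
  then show "(\<Sum>x\<in>UNIV. if k = i then if x = a then 1 else 0 else \<pi> $ k $ x) = (1::real)"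
    by (cases "k = i") auto
qed

lemma Rset_support: "\<pi> \<in> Rset Ok \<Longrightarrow> \<pi>$i$a \<noteq> 0 \<Longrightarrow> a \<in> Ok i"
  by (auto simp: Rset_def)

lemma det_mat_comp: "det_mat d $ i $ a = (if a = d i then 1 else 0)"
  by (simp add: det_mat_def)

lemma det_Rset: "(\<forall>i. d i \<in> Ok i) \<Longrightarrow> det_mat d \<in> Rset Ok"
  by (auto simp: Rset_def Pdist_def det_mat_comp)

lemma row_sum_nz:
  fixes \<pi> :: "real^'a::finite^'s::finite"
  assumes "\<pi>$i \<in> Pdist" shows "\<exists>a. \<pi>$i$a \<noteq> 0"
proof (rule ccontr)
  assume "\<not> (\<exists>a. \<pi>$i$a \<noteq> 0)"
  then have "(\<Sum>a\<in>UNIV. \<pi>$i$a) = 0" by simp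
  then show False using assms by (simp add: Pdist_def)
qed

lemma Rset_induct[consumes 1, case_names base step]:
  fixes \<pi> :: "real^'a::finite^'s::finite"
  assumes "\<pi> \<in> Rset Ok"
    and base: "\<And>d. (\<forall>i. d i \<in> Ok i) \<Longrightarrow> P (det_mat d)"
    and step: "\<And>\<pi> i. \<pi> \<in> Rset Ok \<Longrightarrow> 2 \<le> card {a. \<pi>$i$a \<noteq> 0}
        \<Longrightarrow> (\<And>a. \<pi>$i$a \<noteq> 0 \<Longrightarrow> P (upd \<pi> i a)) \<Longrightarrow> P \<pi>"
  shows "P \<pi>"
  using assms(1)
proof (induction "card {p. \<pi>$(fst p)$(snd p) \<noteq> 0}" arbitrary: \<pi> rule: less_induct)
  case less
  show ?case
  proof (cases "\<exists>i. 2 \<le> card {a. \<pi>$i$a \<noteq> 0}")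
    case True
    then obtain i where i: "2 \<le> card {a. \<pi>$i$a \<noteq> 0}" by blast
    show ?thesis
    proof (rule step[OF less.prems i])
      fix a assume a: "\<pi>$i$a \<noteq> 0"
      have aO: "a \<in> Ok i" using Rset_support[OF less.prems a] .
      obtain b where b: "\<pi>$i$b \<noteq> 0" "b \<noteq> a"
      proof -
        have "\<not> {a. \<pi>$i$a \<noteq> 0} \<subseteq> {a}"
        proof
          assume "{a. \<pi>$i$a \<noteq> 0} \<subseteq> {a}"
          then have "card {a. \<pi>$i$a \<noteq> 0} \<le> card {a}" by (intro card_mono) auto
          then show False using i by simp
        qed
        then show ?thesis using that by blast
      qed
      have sub: "{p. upd \<pi> i a $(fst p)$(snd p) \<noteq> 0} \<subset> {p. \<pi>$(fst p)$(snd p) \<noteq> 0}"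
      proof
        show "{p. upd \<pi> i a $(fst p)$(snd p) \<noteq> 0} \<subseteq> {p. \<pi>$(fst p)$(snd p) \<noteq> 0}"
          using a by (auto simp: upd_comp split: if_splits)
        show "{p. upd \<pi> i a $(fst p)$(snd p) \<noteq> 0} \<noteq> {p. \<pi>$(fst p)$(snd p) \<noteq> 0}"
        proof
          assume "{p. upd \<pi> i a $(fst p)$(snd p) \<noteq> 0} = {p. \<pi>$(fst p)$(snd p) \<noteq> 0}"
          then have "(i,b) \<in> {p. upd \<pi> i a $(fst p)$(snd p) \<noteq> 0}" using b by auto
          then show False using b by (simp add: upd_comp)
        qed
      qed
      have "card {p. upd \<pi> i a $(fst p)$(snd p) \<noteq> 0} < card {p. \<pi>$(fst p)$(snd p) \<noteq> 0}"
        by (rule psubset_card_mono[OF _ sub]) simp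
      then show "P (upd \<pi> i a)" using less.hyps upd_Rset[OF less.prems aO] by blast
    qed
  next
    case False
    then have c1: "card {a. \<pi>$i$a \<noteq> 0} \<le> 1" for i
      using False by (metis not_le Suc_1 Suc_leI)
    define d where "d i = (SOME a. \<pi>$i$a \<noteq> 0)" for i
    have dnz: "\<pi>$i$(d i) \<noteq> 0" for i
      unfolding d_def using row_sum_nz[of \<pi> i] less.prems by (metis (mono_tags, lifting) Rset_def mem_Collect_eq someI_ex)
    have oth: "\<pi>$i$b = 0" if "b \<noteq> d i" for i b
    proof (rule ccontr)
      assume "\<pi>$i$b \<noteq> 0"
      then have "{b, d i} \<subseteq> {a. \<pi>$i$a \<noteq> 0}" using dnz by auto
      then have "card {b, d i} \<le> card {a. \<pi>$i$a \<noteq> 0}" by (intro card_mono) auto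
      then show False using c1[of i] that by simp
    qed
    have one: "\<pi>$i$(d i) = 1" for i
    proof -
      have "1 = (\<Sum>a\<in>UNIV. \<pi>$i$a)" using less.prems by (simp add: Rset_def Pdist_def)
      also have "\<dots> = \<pi>$i$(d i) + (\<Sum>a\<in>UNIV-{d i}. \<pi>$i$a)" by (subst sum.remove[of UNIV "d i"]) auto
      also have "(\<Sum>a\<in>UNIV-{d i}. \<pi>$i$a) = 0" using oth by (intro sum.neutral) auto
      finally show ?thesis by simp
    qed
    have "\<pi> = det_mat d" using oth one by (auto simp: vec_eq_iff det_mat_comp)
    moreover have "\<forall>i. d i \<in> Ok i" using dnz Rset_support[OF less.prems] by blast
    ultimately show ?thesis using base by simp
  qed
qed



lemma Qpol_cons:
  fixes Q :: "real^'s::finite \<Rightarrow> 's \<Rightarrow> 's \<Rightarrow> 'a::finite \<Rightarrow> real"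
    and \<pi> :: "real^'a^'s"
  assumes CQ: "\<And>a. conservative (\<lambda>i j. Q m i j a)" and rows: "\<forall>i. \<pi>$i \<in> Pdist"
  shows "conservative (Qpol Q m \<pi>)"
  unfolding conservative_def
proof safe
  fix i j :: 's assume "i \<noteq> j"
  then show "0 \<le> Qpol Q m \<pi> i j"
    unfolding Qpol_def
  proof (intro sum_nonneg mult_nonneg_nonneg)
    fix a
    show "0 \<le> Q m i j a" using CQ[of a] \<open>i \<noteq> j\<close> unfolding conservative_def by blast
    show "0 \<le> \<pi>$i$a" using rows unfolding Pdist_def by blast
  qed
next
  fix i
  have "(\<Sum>j\<in>UNIV. Qpol Q m \<pi> i j) = (\<Sum>a\<in>UNIV. \<pi>$i$a * (\<Sum>j\<in>UNIV. Q m i j a))"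
    unfolding Qpol_def by (subst sum.swap) (simp add: sum_distrib_left mult.commute)
  also have "\<dots> = 0" using CQ by (simp add: conservative_def)
  finally show "(\<Sum>j\<in>UNIV. Qpol Q m \<pi> i j) = 0" .
qed

lemma Qpol_irr:
  fixes Q :: "real^'s::finite \<Rightarrow> 's \<Rightarrow> 's \<Rightarrow> 'a::finite \<Rightarrow> real"
    and \<pi> :: "real^'a^'s"
  assumes CQ: "\<And>a. conservative (\<lambda>i j. Q m i j a)" and rows: "\<forall>i. \<pi>$i \<in> Pdist"
    and irr: "\<And>d :: 's \<Rightarrow> 'a. irreducible (Qpol Q m (det_mat d))"
  shows "irreducible (Qpol Q m \<pi>)"
proof -
  define d where "d k = (SOME a. \<pi>$k$a \<noteq> 0)" for k
  have dnz: "\<pi>$k$(d k) \<noteq> 0" for k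
  proof -
    have "\<exists>a. \<pi>$k$a \<noteq> 0" using row_sum_nz[of \<pi> k] rows by blast
    then show ?thesis unfolding d_def by (rule someI_ex)
  qed
  have dpos: "0 < \<pi>$k$(d k)" for k using dnz[of k] rows by (auto simp: Pdist_def order_le_less)
  have qd: "Qpol Q m (det_mat d) k l = Q m k l (d k)" for k l
  proof -
    have "Qpol Q m (det_mat d) k l = (\<Sum>a\<in>UNIV. if a = d k then Q m k l a else 0)"
      unfolding Qpol_def by (intro sum.cong) (auto simp: det_mat_comp)
    then show ?thesis by simp
  qed
  have sub: "{(k, l). k \<noteq> l \<and> 0 < Qpol Q m (det_mat d) k l} \<subseteq> {(k, l). k \<noteq> l \<and> 0 < Qpol Q m \<pi> k l}"
  proof clarify
    fix k l assume kl: "k \<noteq> l" and p: "0 < Qpol Q m (det_mat d) k l"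
    have "Q m k l (d k) * \<pi>$k$(d k) \<le> Qpol Q m \<pi> k l"
      unfolding Qpol_def
    proof (rule member_le_sum)
      fix a
      have "0 \<le> Q m k l a" using CQ[of a] kl unfolding conservative_def by blast
      moreover have "0 \<le> \<pi>$k$a" using rows unfolding Pdist_def by blast
      ultimately show "0 \<le> Q m k l a * \<pi>$k$a" by simp
    qed auto
    moreover have "0 < Q m k l (d k) * \<pi>$k$(d k)" using p qd dpos by simp
    ultimately show "0 < Qpol Q m \<pi> k l" by linarith
  qed
  show ?thesis using irr[of d] rtrancl_mono[OF sub] unfolding irreducible_def by blast
qed

lemma convex_Rset: "convex (Rset (Ok :: 's::finite \<Rightarrow> 'a::finite set))"
  unfolding convex_def
proof safe
  fix x y :: "real^'a^'s" and u v :: real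
  assume x: "x \<in> Rset Ok" and y: "y \<in> Rset Ok" and u: "0 \<le> u" and v: "0 \<le> v" and uv: "u + v = 1"
  have rows: "(u *\<^sub>R x + v *\<^sub>R y)$i \<in> Pdist" for i
  proof -
    have "(u *\<^sub>R x + v *\<^sub>R y)$i = u *\<^sub>R x$i + v *\<^sub>R y$i" by simp
    also have "\<dots> \<in> Pdist" using convex_Pdist x y u v uv unfolding convex_def Rset_def by blast
    finally show ?thesis .
  qed
  have supp: "a \<in> Ok i" if "(u *\<^sub>R x + v *\<^sub>R y)$i$a \<noteq> 0" for i a
  proof -
    have "x$i$a \<noteq> 0 \<or> y$i$a \<noteq> 0" using that by auto
    then show ?thesis using x y by (auto simp: Rset_def)
  qed
  show "u *\<^sub>R x + v *\<^sub>R y \<in> Rset Ok" using rows supp by (auto simp: Rset_def)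
qed

lemma hull_sub_Rset: "convex hull (det_mat ` {d. \<forall>i. d i \<in> Ok i}) \<subseteq> Rset Ok"
  by (rule hull_minimal) (auto intro: det_Rset convex_Rset)

lemma sum_supp:
  fixes \<pi> :: "real^'a::finite^'s::finite" and f :: "'a \<Rightarrow> real"
  shows "(\<Sum>a\<in>{a. \<pi>$i$a \<noteq> 0}. f a * \<pi>$i$a) = (\<Sum>a\<in>UNIV. f a * \<pi>$i$a)"
  by (rule sum.mono_neutral_left) auto

lemma Rset_sub_hull:
  assumes "\<pi> \<in> Rset Ok"
  shows "\<pi> \<in> convex hull (det_mat ` {d. \<forall>i. d i \<in> Ok i})"
  using assms
proof (induction rule: Rset_induct)
  case (base d) then show ?case by (intro hull_inc) auto
next
  case (step \<pi> i)
  let ?A = "{a. \<pi>$i$a \<noteq> 0}"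
  have s1: "(\<Sum>a\<in>?A. \<pi>$i$a) = 1"
    using sum_supp[where \<pi>=\<pi> and i=i and f="\<lambda>_. 1"] step(1) by (simp add: Rset_def Pdist_def)
  have eq: "\<pi> = (\<Sum>a\<in>?A. \<pi>$i$a *\<^sub>R upd \<pi> i a)"
  proof (subst vec_eq_iff, intro allI, subst vec_eq_iff, intro allI)
    fix k b
    show "\<pi>$k$b = (\<Sum>a\<in>?A. \<pi>$i$a *\<^sub>R upd \<pi> i a)$k$b"
    proof (cases "k = i")
      case True
      then have "(\<Sum>a\<in>?A. \<pi>$i$a *\<^sub>R upd \<pi> i a)$k$b = (\<Sum>a\<in>?A. if b = a then \<pi>$i$a else 0)"
        unfolding sum_component by (intro sum.cong) (auto simp: upd_comp)
      also have "\<dots> = \<pi>$k$b" using True by (subst sum.delta') auto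
      finally show ?thesis by simp
    next
      case False
      then have "(\<Sum>a\<in>?A. \<pi>$i$a *\<^sub>R upd \<pi> i a)$k$b = (\<Sum>a\<in>?A. \<pi>$i$a) * \<pi>$k$b"
        by (simp add: upd_comp sum_distrib_right)
      then show ?thesis using s1 by simp
    qed
  qed
  have "(\<Sum>a\<in>?A. \<pi>$i$a *\<^sub>R upd \<pi> i a) \<in> convex hull (det_mat ` {d. \<forall>i. d i \<in> Ok i})"
    by (rule convex_sum) (use s1 step in \<open>auto simp: Rset_def Pdist_def\<close>)
  then show ?case using eq by simp
qed



lemma stat_Qpol_iff:
  "stat (Qpol Q m \<pi>) x \<longleftrightarrow> (\<forall>j. (\<Sum>i\<in>UNIV. \<Sum>a\<in>UNIV. x$i * Q m i j a * \<pi>$i$a) = 0)"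
  by (simp add: stat_def Qpol_def sum_distrib_left mult.assoc)

lemma xdet_props:
  fixes Q :: "real^'s::finite \<Rightarrow> 's \<Rightarrow> 's \<Rightarrow> 'a::finite \<Rightarrow> real"
  assumes CQ: "\<And>a. conservative (\<lambda>i j. Q m i j a)"
    and irr: "irreducible (Qpol Q m (det_mat d))"
  shows "xdet Q m d \<in> Pdist \<and> stat (Qpol Q m (det_mat d)) (xdet Q m d)"
    and "x \<in> Pdist \<Longrightarrow> stat (Qpol Q m (det_mat d)) x \<Longrightarrow> x = xdet Q m d"
proof -
  have rows: "\<forall>i. det_mat d $ i \<in> Pdist" using det_Rset[of d "\<lambda>_. UNIV"] by (simp add: Rset_def)
  have cons: "conservative (Qpol Q m (det_mat d))" by (rule Qpol_cons[where Q=Q and m=m, OF CQ rows])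
  have ex1: "\<exists>!x. x \<in> Pdist \<and> stat (Qpol Q m (det_mat d)) x"
    using stat_exists[OF cons] stat_unique[OF cons irr] by blast
  have xd: "xdet Q m d = (THE x. x \<in> Pdist \<and> stat (Qpol Q m (det_mat d)) x)"
    unfolding xdet_def stat_Qpol_iff ..
  show "xdet Q m d \<in> Pdist \<and> stat (Qpol Q m (det_mat d)) (xdet Q m d)"
    unfolding xd by (rule theI'[OF ex1])
  show "x \<in> Pdist \<Longrightarrow> stat (Qpol Q m (det_mat d)) x \<Longrightarrow> x = xdet Q m d"
    unfolding xd by (rule the1_equality[OF ex1, symmetric]) simp
qed

lemma Qpol_upd:
  "Qpol Q m (upd \<pi> i a) k j = (if k = i then Q m i j a else Qpol Q m \<pi> k j)"
proof (cases "k = i")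
  case True
  have "Qpol Q m (upd \<pi> i a) k j = (\<Sum>b\<in>UNIV. if b = a then Q m i j b else 0)"
    unfolding Qpol_def using True by (intro sum.cong) (auto simp: upd_comp)
  then show ?thesis using True by simp
next
  case False
  then show ?thesis by (simp add: Qpol_def upd_comp)
qed

lemma phi_sub:
  fixes Q :: "real^'s::finite \<Rightarrow> 's \<Rightarrow> 's \<Rightarrow> 'a::finite \<Rightarrow> real"
    and \<pi> :: "real^'a^'s"
  assumes CQ: "\<And>a. conservative (\<lambda>i j. Q m i j a)"
    and irr: "\<And>d :: 's \<Rightarrow> 'a. irreducible (Qpol Q m (det_mat d))"
    and \<pi>R: "\<pi> \<in> Rset Ok"
  shows "\<forall>x. x \<in> Pdist \<longrightarrow> stat (Qpol Q m \<pi>) x \<longrightarrow> x \<in> convex hull (xdet Q m ` {d. \<forall>i. d i \<in> Ok i})"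
  using \<pi>R
proof (induction rule: Rset_induct)
  case (base d)
  show ?case
  proof safe
    fix x assume "x \<in> Pdist" "stat (Qpol Q m (det_mat d)) x"
    then have "x = xdet Q m d" using xdet_props(2)[OF CQ irr] by blast
    then show "x \<in> convex hull (xdet Q m ` {d. \<forall>i. d i \<in> Ok i})" using base by (intro hull_inc) auto
  qed
next
  case (step \<pi> i)
  let ?A = "{a. \<pi>$i$a \<noteq> 0}"
  let ?H = "convex hull (xdet Q m ` {d. \<forall>i. d i \<in> Ok i})"
  have rowsP: "\<forall>k. \<pi>$k \<in> Pdist" using step(1) by (simp add: Rset_def)
  have consP: "conservative (Qpol Q m \<pi>)" by (rule Qpol_cons[where Q=Q and m=m, OF CQ rowsP])
  have irrP: "irreducible (Qpol Q m \<pi>)" by (rule Qpol_irr[where Q=Q and m=m, OF CQ rowsP irr])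
  have piA: "0 < \<pi>$i$a" if "a \<in> ?A" for a
    using that rowsP by (auto simp: Pdist_def order_le_less)
  define xa where "xa a = (SOME y. y \<in> Pdist \<and> stat (Qpol Q m (upd \<pi> i a)) y)" for a
  have xa: "xa a \<in> Pdist \<and> stat (Qpol Q m (upd \<pi> i a)) (xa a) \<and> 0 < xa a $ i \<and> xa a \<in> ?H"
    if aA: "a \<in> ?A" for a
  proof -
    have uR: "upd \<pi> i a \<in> Rset Ok" using upd_Rset[OF step(1) Rset_support[OF step(1)]] aA by simp
    have rowsU: "\<forall>k. upd \<pi> i a $ k \<in> Pdist" using uR by (simp add: Rset_def)
    have consU: "conservative (Qpol Q m (upd \<pi> i a))" by (rule Qpol_cons[where Q=Q and m=m, OF CQ rowsU])
    have irrU: "irreducible (Qpol Q m (upd \<pi> i a))" by (rule Qpol_irr[where Q=Q and m=m, OF CQ rowsU irr])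
    have "\<exists>y. y \<in> Pdist \<and> stat (Qpol Q m (upd \<pi> i a)) y" using stat_exists[OF consU] by blast
    then have h: "xa a \<in> Pdist \<and> stat (Qpol Q m (upd \<pi> i a)) (xa a)"
      unfolding xa_def by (rule someI_ex)
    moreover have "0 < xa a $ i" using stat_pos[OF consU irrU] h by blast
    moreover have "xa a \<in> ?H" using step(3)[of a] aA h by blast
    ultimately show ?thesis by blast
  qed
  define w where "w a = \<pi>$i$a / xa a $ i" for a
  define W where "W = (\<Sum>a\<in>?A. w a)"
  have wpos: "0 < w a" if "a \<in> ?A" for a using piA[OF that] xa[OF that] by (simp add: w_def)
  have Ane: "?A \<noteq> {}" using step(2) by (metis card.empty not_numeral_le_zero)
  have Wpos: "0 < W" unfolding W_def using wpos Ane by (intro sum_pos) auto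
  define lam where "lam a = w a / W" for a
  have lam1: "(\<Sum>a\<in>?A. lam a) = 1" using Wpos by (simp add: lam_def W_def sum_divide_distrib[symmetric])
  have lam0: "0 \<le> lam a" if "a \<in> ?A" for a using wpos[OF that] Wpos by (simp add: lam_def)
  define z where "z = (\<Sum>a\<in>?A. lam a *\<^sub>R xa a)"
  have zP: "z \<in> Pdist" unfolding z_def
    by (rule convex_sum[OF _ convex_Pdist lam1]) (use lam0 xa in auto)
  have zH: "z \<in> ?H" unfolding z_def
    by (rule convex_sum[OF _ convex_convex_hull lam1]) (use lam0 xa in auto)
  have key: "(\<Sum>k\<in>UNIV. xa a $ k * Qpol Q m \<pi> k j) = xa a $ i * (Qpol Q m \<pi> i j - Q m i j a)"
    if aA: "a \<in> ?A" for a j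
  proof -
    have "(\<Sum>k\<in>UNIV. xa a $ k * Qpol Q m \<pi> k j)
        = (\<Sum>k\<in>UNIV. xa a $ k * Qpol Q m (upd \<pi> i a) k j
             + (if k = i then xa a $ i * (Qpol Q m \<pi> i j - Q m i j a) else 0))"
      by (intro sum.cong) (auto simp: Qpol_upd algebra_simps)
    also have "\<dots> = (\<Sum>k\<in>UNIV. xa a $ k * Qpol Q m (upd \<pi> i a) k j)
             + xa a $ i * (Qpol Q m \<pi> i j - Q m i j a)"
      by (simp add: sum.distrib)
    also have "(\<Sum>k\<in>UNIV. xa a $ k * Qpol Q m (upd \<pi> i a) k j) = 0"
      using xa[OF aA] by (simp add: stat_def)
    finally show ?thesis by simp
  qed
  have sA: "(\<Sum>a\<in>?A. \<pi>$i$a) = 1"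
    using sum_supp[where \<pi>=\<pi> and i=i and f="\<lambda>_. 1"] rowsP by (simp add: Pdist_def)
  have sQ: "(\<Sum>a\<in>?A. Q m i j a * \<pi>$i$a) = Qpol Q m \<pi> i j" for j
    using sum_supp[where \<pi>=\<pi> and i=i and f="\<lambda>a. Q m i j a"] by (simp add: Qpol_def)
  have stz: "stat (Qpol Q m \<pi>) z"
    unfolding stat_def
  proof
    fix j
    have "(\<Sum>k\<in>UNIV. z $ k * Qpol Q m \<pi> k j) = (\<Sum>k\<in>UNIV. \<Sum>a\<in>?A. lam a * (xa a $ k * Qpol Q m \<pi> k j))"
      unfolding z_def by (simp add: sum_distrib_right mult.assoc)
    also have "\<dots> = (\<Sum>a\<in>?A. lam a * (\<Sum>k\<in>UNIV. xa a $ k * Qpol Q m \<pi> k j))"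
      by (subst sum.swap) (simp add: sum_distrib_left)
    also have "\<dots> = (\<Sum>a\<in>?A. lam a * (xa a $ i * (Qpol Q m \<pi> i j - Q m i j a)))"
      using key by (intro sum.cong) auto
    also have "\<dots> = (\<Sum>a\<in>?A. (1/W) * (Qpol Q m \<pi> i j * \<pi>$i$a - Q m i j a * \<pi>$i$a))"
    proof (intro sum.cong refl)
      fix a assume "a \<in> ?A"
      then have "xa a $ i \<noteq> 0" using xa by fastforce
      then show "lam a * (xa a $ i * (Qpol Q m \<pi> i j - Q m i j a))
          = (1/W) * (Qpol Q m \<pi> i j * \<pi>$i$a - Q m i j a * \<pi>$i$a)"
        using Wpos by (simp add: lam_def w_def field_simps)
    qed
    also have "\<dots> = (1/W) * (\<Sum>a\<in>?A. Qpol Q m \<pi> i j * \<pi>$i$a - Q m i j a * \<pi>$i$a)"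
      by (rule sum_distrib_left[symmetric])
    also have "\<dots> = (1/W) * ((\<Sum>a\<in>?A. Qpol Q m \<pi> i j * \<pi>$i$a) - (\<Sum>a\<in>?A. Q m i j a * \<pi>$i$a))"
      by (simp only: sum_subtractf)
    also have "\<dots> = (1/W) * (Qpol Q m \<pi> i j * (\<Sum>a\<in>?A. \<pi>$i$a) - (\<Sum>a\<in>?A. Q m i j a * \<pi>$i$a))"
      by (simp only: sum_distrib_left)
    also have "\<dots> = 0" using sA sQ[of j] by simp
    finally show "(\<Sum>k\<in>UNIV. z $ k * Qpol Q m \<pi> k j) = 0" .
  qed
  show ?case
  proof safe
    fix x assume "x \<in> Pdist" "stat (Qpol Q m \<pi>) x"
    then have "x = z" using stat_unique[OF consP irrP _ _ zP stz] by blast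
    then show "x \<in> ?H" using zH by simp
  qed
qed



lemma convex_PH:
  fixes Q :: "real^'s::finite \<Rightarrow> 's \<Rightarrow> 's \<Rightarrow> 'a::finite \<Rightarrow> real"
    and Ok :: "'s \<Rightarrow> 'a set"
  assumes CQ: "\<And>a. conservative (\<lambda>i j. Q m i j a)"
    and irr: "\<And>d :: 's \<Rightarrow> 'a. irreducible (Qpol Q m (det_mat d))"
  shows "convex {x\<in>Pdist. \<exists>\<pi>\<in>Rset Ok. stat (Qpol Q m \<pi>) x}"
  unfolding convex_def
proof safe
  fix x y :: "real^'s" and u v :: real and \<pi> \<pi>' :: "real^'a^'s"
  assume x: "x \<in> Pdist" and y: "y \<in> Pdist" and u: "0 \<le> u" and v: "0 \<le> v" and uv: "u + v = 1"
    and \<pi>: "\<pi> \<in> Rset Ok" and sx: "stat (Qpol Q m \<pi>) x"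
    and \<pi>': "\<pi>' \<in> Rset Ok" and sy: "stat (Qpol Q m \<pi>') y"
  have rows: "\<forall>k. \<pi>$k \<in> Pdist" using \<pi> by (simp add: Rset_def)
  have rows': "\<forall>k. \<pi>'$k \<in> Pdist" using \<pi>' by (simp add: Rset_def)
  have px: "0 < x$k" for k
    using stat_pos[OF Qpol_cons[where Q=Q and m=m, OF CQ rows] Qpol_irr[where Q=Q and m=m, OF CQ rows irr] x sx] .
  have py: "0 < y$k" for k
    using stat_pos[OF Qpol_cons[where Q=Q and m=m, OF CQ rows'] Qpol_irr[where Q=Q and m=m, OF CQ rows' irr] y sy] .
  define s where "s = u *\<^sub>R x + v *\<^sub>R y"
  show "s \<in> Pdist" unfolding s_def using convex_Pdist x y u v uv unfolding convex_def by blast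
  have spos: "0 < s$k" for k
  proof (cases "u = 0")
    case True then show ?thesis using uv py[of k] by (simp add: s_def)
  next
    case False then have "0 < u * x$k" using u px[of k] by simp
    moreover have "0 \<le> v * y$k" using v py[of k] by simp
    ultimately show ?thesis by (simp add: s_def)
  qed
  define \<rho> :: "real^'a^'s" where
    "\<rho> = (\<chi> k. \<chi> a. (u * x$k * \<pi>$k$a + v * y$k * \<pi>'$k$a) / s$k)"
  have \<rho>c: "\<rho>$k$a = (u * x$k * \<pi>$k$a + v * y$k * \<pi>'$k$a) / s$k" for k a
    by (simp add: \<rho>_def)
  have \<rho>R: "\<rho> \<in> Rset Ok"
    unfolding Rset_def
  proof safe
    fix k
    show "\<rho>$k \<in> Pdist"
      unfolding Pdist_def
    proof safe
      fix a show "0 \<le> \<rho>$k$a" unfolding \<rho>c using spos[of k] px[of k] py[of k] u v rows rows'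
        by (auto simp: Pdist_def intro!: divide_nonneg_pos add_nonneg_nonneg mult_nonneg_nonneg)
    next
      have "(\<Sum>a\<in>UNIV. \<rho>$k$a) = (u * x$k * (\<Sum>a\<in>UNIV. \<pi>$k$a) + v * y$k * (\<Sum>a\<in>UNIV. \<pi>'$k$a)) / s$k"
        unfolding \<rho>c by (simp add: sum_divide_distrib[symmetric] sum.distrib sum_distrib_left)
      also have "\<dots> = 1" using rows rows' spos[of k] by (simp add: Pdist_def s_def)
      finally show "(\<Sum>a\<in>UNIV. \<rho>$k$a) = 1" .
    qed
  next
    fix k a assume "\<rho>$k$a \<noteq> 0"
    then have "\<pi>$k$a \<noteq> 0 \<or> \<pi>'$k$a \<noteq> 0" unfolding \<rho>c by auto
    then show "a \<in> Ok k" using \<pi> \<pi>' by (auto simp: Rset_def)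
  qed
  have st: "stat (Qpol Q m \<rho>) s"
    unfolding stat_def
  proof
    fix j
    have e: "s$k * Qpol Q m \<rho> k j = u * (x$k * Qpol Q m \<pi> k j) + v * (y$k * Qpol Q m \<pi>' k j)" for k
    proof -
      have "s$k * Qpol Q m \<rho> k j = (\<Sum>a\<in>UNIV. Q m k j a * (s$k * \<rho>$k$a))"
        unfolding Qpol_def by (simp add: sum_distrib_left algebra_simps)
      also have "\<dots> = (\<Sum>a\<in>UNIV. Q m k j a * (u * x$k * \<pi>$k$a + v * y$k * \<pi>'$k$a))"
        using spos[of k] by (simp add: \<rho>c)
      also have "\<dots> = u * (x$k * Qpol Q m \<pi> k j) + v * (y$k * Qpol Q m \<pi>' k j)"
        unfolding Qpol_def by (simp add: sum_distrib_left sum.distrib algebra_simps)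
      finally show ?thesis .
    qed
    have "(\<Sum>k\<in>UNIV. s$k * Qpol Q m \<rho> k j)
        = u * (\<Sum>k\<in>UNIV. x$k * Qpol Q m \<pi> k j) + v * (\<Sum>k\<in>UNIV. y$k * Qpol Q m \<pi>' k j)"
      unfolding e by (simp add: sum.distrib sum_distrib_left)
    also have "\<dots> = 0" using sx sy by (simp add: stat_def)
    finally show "(\<Sum>k\<in>UNIV. s$k * Qpol Q m \<rho> k j) = 0" .
  qed
  show "\<exists>\<pi>\<in>Rset Ok. stat (Qpol Q m \<pi>) s" using \<rho>R st by blast
qed



theorem mainTheorem8:
  fixes Q :: "real^'s::finite \<Rightarrow> 's \<Rightarrow> 's \<Rightarrow> 'a::finite \<Rightarrow> real"
    and r :: "real^'s \<Rightarrow> 's \<Rightarrow> 'a \<Rightarrow> real"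
    and \<beta> :: real
    and m :: "real^'s"
  assumes S_gt1: "CARD('s) > 1"
    and conserv: "\<And>a m. m \<in> Pdist \<Longrightarrow> conservative (\<lambda>i j. Q m i j a)"
    and Q_lip: "\<And>i j a. \<exists>C. C-lipschitz_on Pdist (\<lambda>m. Q m i j a)"
    and r_cont: "\<And>i a. continuous_on Pdist (\<lambda>m. r m i a)"
    and beta: "0 < \<beta>" "\<beta> < 1"
    and m_dist: "m \<in> Pdist"
    and irred: "\<And>d :: 's \<Rightarrow> 'a. irreducible (Qpol Q m (det_mat d))"
  shows "phi Q r \<beta> m = convex hull (xdet Q m ` Dopt Q r \<beta> m)"
proof -
  define Ok where "Ok = Oset Q r \<beta> m"
  have CQ: "\<And>a. conservative (\<lambda>i j. Q m i j a)" using conserv[OF m_dist] .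
  have D: "Dopt Q r \<beta> m = {d. \<forall>i. d i \<in> Ok i}" by (simp add: Dopt_def Ok_def)
  have HR: "convex hull (det_mat ` Dopt Q r \<beta> m) = Rset Ok"
    unfolding D using hull_sub_Rset Rset_sub_hull by blast
  have PH: "phi Q r \<beta> m = {x\<in>Pdist. \<exists>\<pi>\<in>Rset Ok. stat (Qpol Q m \<pi>) x}"
    unfolding phi_def HR stat_def ..
  show ?thesis
  proof
    show "phi Q r \<beta> m \<subseteq> convex hull (xdet Q m ` Dopt Q r \<beta> m)"
    proof
      fix x assume "x \<in> phi Q r \<beta> m"
      then obtain \<pi> where x: "x \<in> Pdist" and \<pi>: "\<pi> \<in> Rset Ok" and st: "stat (Qpol Q m \<pi>) x"
        unfolding PH by blast
      show "x \<in> convex hull (xdet Q m ` Dopt Q r \<beta> m)"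
        unfolding D using phi_sub[where Q=Q and m=m, OF CQ irred \<pi>] x st by blast
    qed
  next
    show "convex hull (xdet Q m ` Dopt Q r \<beta> m) \<subseteq> phi Q r \<beta> m"
      unfolding PH
    proof (rule hull_minimal)
      show "xdet Q m ` Dopt Q r \<beta> m \<subseteq> {x \<in> Pdist. \<exists>\<pi>\<in>Rset Ok. stat (Qpol Q m \<pi>) x}"
      proof clarify
        fix d assume "d \<in> Dopt Q r \<beta> m"
        then have dR: "det_mat d \<in> Rset Ok" unfolding D by (intro det_Rset) auto
        have "xdet Q m d \<in> Pdist \<and> stat (Qpol Q m (det_mat d)) (xdet Q m d)"
          by (rule xdet_props(1)[where Q=Q and m=m, OF CQ irred])
        then show "xdet Q m d \<in> Pdist \<and> (\<exists>\<pi>\<in>Rset Ok. stat (Qpol Q m \<pi>) (xdet Q m d))"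
          using dR by blast
      qed
      show "convex {x \<in> Pdist. \<exists>\<pi>\<in>Rset Ok. stat (Qpol Q m \<pi>) x}"
        by (rule convex_PH[where Q=Q and m=m, OF CQ irred])
    qed
  qed
qed


end
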